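(* Let $U\subseteq\mathbb{R}^d$ be a U-shaped convex set, let $\varepsilon>0$, and let $q\in\overline{\partial}U$ be an augmented point such that $\mathrm{Cap}_\varepsilon(q)(U)$ is bounded. Let $H^-$ be the closed lower halfspace bounded by $h(q)$, let $T=\mathrm{conv}(U\cup\{q-\varepsilon\})\cap H^-$, and let $T'$ be the scaling of $T$ by factor $2$ about $q-\varepsilon$. Then: (i) $T+\varepsilon\subseteq U\cap(H^-+\varepsilon)\subseteq T'$; (ii) $\mathrm{vol}(U\cap(H^-+\varepsilon))=\Theta(\mathrm{vol}(T))$; (iii) $\mathrm{vol}(T)=\Omega(\varepsilon\cdot\mathrm{area}(\mathrm{DBase}_\varepsilon(q)^\downarrow))$; (iv) the vertical projection onto $\overline{\partial}U$ of any point in the interior of $T+\varepsilon$, augmented by any supporting hyperplane through that projected point, lies in $\mathrm{DCap}_\varepsilon(q)(U)$. The constants in $\Theta$ and $\Omega$ depend only on $d$.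
   Context: Coordinates in $\mathbb{R}^d$ have the last coordinate as upward vertical direction. A closed convex set $U$ is U-shaped if for every boundary point the upward vertical ray from it lies in $U$. The lower boundary $\overline{\partial}U$ is the set of boundary points of $U$ with a non-vertical supporting hyperplane; each point $q$ is augmented by a choice $h(q)$ of non-vertical supporting hyperplane at $q$. For a point or set $S$, $S\pm\varepsilon$ denotes vertical translation by $\pm\varepsilon$, and $S^\downarrow$ the orthogonal projection onto the hyperplane $\{y=0\}$, identified with $\mathbb{R}^{d-1}$; $\mathrm{area}$ of a subset of $\mathbb{R}^{d-1}$ is its $(d-1)$-dimensional Lebesgue measure. The $\varepsilon$-cap $\mathrm{Cap}_\varepsilon(q)(U)$ is the set of augmented points of $\overline{\partial}U$ in the closed lower halfspace of $h(q)+\varepsilon$. The $\varepsilon$-dual cap $\mathrm{DCap}_\varepsilon(q)(U)$ is the set of augmented points $p\in\overline{\partial}U$ such that $q-\varepsilon$ lies in the closed lower halfspace of $h(p)$; its base is $\mathrm{DBase}_\varepsilon(q)=h(q)\cap\mathrm{conv}(U\cup\{q-\varepsilon\})$. *)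

theory Defs
  imports "HOL-Analysis.Analysis"
begin

text \<open>Points of R^d are pairs (x, y) with x in R^(d-1) (type 'a) and y the vertical
  coordinate.  A non-vertical hyperplane is encoded by (a, b) :: 'a \<times> real and stands
  for {(x,y). y = a \<bullet> x + b}.\<close>

definition vshift :: "real \<Rightarrow> ('a::euclidean_space \<times> real) \<Rightarrow> 'a \<times> real" where
  "vshift t p = (fst p, snd p + t)"

definition hplane :: "('a::euclidean_space \<times> real) \<Rightarrow> ('a \<times> real) set" where
  "hplane h = {p. snd p = fst h \<bullet> fst p + snd h}"

definition lower_hs :: "('a::euclidean_space \<times> real) \<Rightarrow> ('a \<times> real) set" where
  "lower_hs h = {p. snd p \<le> fst h \<bullet> fst p + snd h}"

definition upper_hs :: "('a::euclidean_space \<times> real) \<Rightarrow> ('a \<times> real) set" where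
  "upper_hs h = {p. snd p \<ge> fst h \<bullet> fst p + snd h}"

definition hshift :: "real \<Rightarrow> ('a::euclidean_space \<times> real) \<Rightarrow> 'a \<times> real" where
  "hshift t h = (fst h, snd h + t)"

definition U_shaped :: "('a::euclidean_space \<times> real) set \<Rightarrow> bool" where
  "U_shaped U \<longleftrightarrow> closed U \<and> convex U \<and> (\<forall>p\<in>frontier U. \<forall>t\<ge>0. vshift t p \<in> U)"

definition supports :: "('a::euclidean_space \<times> real) set \<Rightarrow> 'a \<times> real \<Rightarrow> 'a \<times> real \<Rightarrow> bool" where
  "supports U p h \<longleftrightarrow> p \<in> hplane h \<and> (U \<subseteq> upper_hs h \<or> U \<subseteq> lower_hs h)"

definition aug_point :: "('a::euclidean_space \<times> real) set \<Rightarrow> ('a \<times> real) \<times> ('a \<times> real) \<Rightarrow> bool" where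
  "aug_point U ph \<longleftrightarrow> fst ph \<in> frontier U \<and> supports U (fst ph) (snd ph)"

definition lower_boundary :: "('a::euclidean_space \<times> real) set \<Rightarrow> ('a \<times> real) set" where
  "lower_boundary U = {p. \<exists>h. aug_point U (p, h)}"

definition Cap :: "('a::euclidean_space \<times> real) set \<Rightarrow> real \<Rightarrow> ('a \<times> real) \<times> ('a \<times> real)
    \<Rightarrow> (('a \<times> real) \<times> ('a \<times> real)) set" where
  "Cap U \<epsilon> qh = {ph. aug_point U ph \<and> fst ph \<in> lower_hs (hshift \<epsilon> (snd qh))}"

definition DCap :: "('a::euclidean_space \<times> real) set \<Rightarrow> real \<Rightarrow> ('a \<times> real) \<times> ('a \<times> real)
    \<Rightarrow> (('a \<times> real) \<times> ('a \<times> real)) set" where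
  "DCap U \<epsilon> qh = {ph. aug_point U ph \<and> vshift (-\<epsilon>) (fst qh) \<in> lower_hs (snd ph)}"

definition DBase :: "('a::euclidean_space \<times> real) set \<Rightarrow> real \<Rightarrow> ('a \<times> real) \<times> ('a \<times> real)
    \<Rightarrow> ('a \<times> real) set" where
  "DBase U \<epsilon> qh = hplane (snd qh) \<inter> convex hull (insert (vshift (-\<epsilon>) (fst qh)) U)"

text \<open>vertical projection onto {y = 0}, identified with R^(d-1)\<close>
definition vproj :: "('a::euclidean_space \<times> real) set \<Rightarrow> 'a set" where
  "vproj S = fst ` S"

end

theory Submission
  imports Defs
begin

lemma vshift_eq: "vshift t p = p + (0, t)"
  by (simp add: vshift_def prod_eq_iff)

lemma vshift_image: "vshift t ` S = {p. vshift (-t) p \<in> S}"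
proof (intro set_eqI iffI)
  fix p assume "p \<in> vshift t ` S" then show "p \<in> {p. vshift (-t) p \<in> S}"
    by (auto simp: vshift_def)
next
  fix p assume "p \<in> {p. vshift (-t) p \<in> S}"
  then have "vshift t (vshift (-t) p) \<in> vshift t ` S" by blast
  moreover have "vshift t (vshift (-t) p) = p" by (simp add: vshift_def)
  ultimately show "p \<in> vshift t ` S" by simp
qed

lemma upward:
  assumes U: "U_shaped U" and u: "u \<in> U" and t: "t \<ge> 0"
  shows "vshift t u \<in> U"
proof (rule ccontr)
  assume n: "vshift t u \<notin> U"
  let ?S = "closed_segment u (vshift t u)"
  have "?S \<inter> frontier U \<noteq> {}"
    by (rule connected_Int_frontier) (use u n in auto)
  then obtain p where p: "p \<in> ?S" "p \<in> frontier U" by blast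
  from p(1) obtain l where l: "0 \<le> l" "l \<le> 1" "p = (1 - l) *\<^sub>R u + l *\<^sub>R vshift t u"
    by (auto simp: in_segment)
  have "vshift ((1 - l) * t) p = vshift t u"
    using l by (simp add: vshift_def prod_eq_iff algebra_simps)
  moreover have "vshift ((1 - l) * t) p \<in> U"
    using U p(2) l t unfolding U_shaped_def by simp
  ultimately show False using n by simp
qed

lemma aug_facts:
  assumes U: "U_shaped U" and a: "aug_point U (p, h)"
  shows "U \<subseteq> upper_hs h" "p \<in> U" "snd p = fst h \<bullet> fst p + snd h"
proof -
  have pf: "p \<in> frontier U" and s: "supports U p h" using a by (auto simp: aug_point_def)
  have cl: "closed U" using U by (simp add: U_shaped_def)
  show pU: "p \<in> U" using frontier_subset_closed[OF cl] pf by blast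
  show hp: "snd p = fst h \<bullet> fst p + snd h" using s by (simp add: supports_def hplane_def)
  have "vshift 1 p \<in> U" using U pf by (simp add: U_shaped_def)
  moreover have "vshift 1 p \<notin> lower_hs h" using hp by (simp add: lower_hs_def vshift_def)
  ultimately have "\<not> U \<subseteq> lower_hs h" by blast
  then show "U \<subseteq> upper_hs h" using s by (simp add: supports_def)
qed

lemma convex_lebesgue:
  fixes S :: "'n::euclidean_space set"
  assumes "convex S" shows "S \<in> sets lebesgue"
proof -
  have "S = interior S \<union> (S - interior S)" using interior_subset by blast
  moreover have "interior S \<in> sets lebesgue" by simp
  moreover have "S - interior S \<in> null_sets lebesgue"
  proof -
    have "S - interior S \<subseteq> frontier S" using closure_subset by (auto simp: frontier_def)
    then have "negligible (S - interior S)"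
      using negligible_convex_frontier[OF assms] negligible_subset by blast
    then show ?thesis by (simp add: negligible_iff_null_sets)
  qed
  ultimately show ?thesis by (metis null_setsD2 sets.Un)
qed


lemma lower_hs_alt: "lower_hs h = {p. (- fst h, 1::real) \<bullet> p \<le> snd h}"
  by (auto simp: lower_hs_def inner_prod_def)
lemma upper_hs_alt: "upper_hs h = {p. (- fst h, 1::real) \<bullet> p \<ge> snd h}"
  by (auto simp: upper_hs_def inner_prod_def)
lemma convex_lower_hs: "convex (lower_hs h)"
  unfolding lower_hs_alt by (rule convex_halfspace_le)
lemma convex_upper_hs: "convex (upper_hs h)"
  unfolding upper_hs_alt by (rule convex_halfspace_ge)
lemma shift_lower_hs: "vshift e ` lower_hs h = lower_hs (fst h, snd h + e)"
  unfolding vshift_image lower_hs_def vshift_def by auto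

lemma part_ia:
  fixes U :: "('a::euclidean_space \<times> real) set"
  assumes U: "U_shaped U" and aq: "aug_point U (q, hq)" and e: "e \<ge> 0"
  shows "vshift e ` (convex hull (insert (vshift (-e) q) U) \<inter> lower_hs hq) \<subseteq> U \<inter> vshift e ` lower_hs hq"
proof
  fix z assume "z \<in> vshift e ` (convex hull (insert (vshift (-e) q) U) \<inter> lower_hs hq)"
  then obtain x where x: "x \<in> convex hull (insert (vshift (-e) q) U)" "x \<in> lower_hs hq" "z = vshift e x"
    by blast
  have qU: "q \<in> U" using aug_facts[OF U aq] by simp
  have cU: "convex U" using U by (simp add: U_shaped_def)
  then have hU: "convex hull U = U" by (simp add: convex_hull_eq)
  have Une: "U \<noteq> {}" using qU by auto
  from x(1)[unfolded convex_hull_insert[OF Une] hU]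
  obtain u v b where uv: "u \<ge> 0" "v \<ge> 0" "u + v = 1" "b \<in> U" "x = u *\<^sub>R vshift (-e) q + v *\<^sub>R b"
    by blast
  have "z = u *\<^sub>R q + v *\<^sub>R vshift e b"
    using uv x(3) by (simp add: vshift_def prod_eq_iff algebra_simps)
      (metis add.commute add_diff_cancel_left' diff_add_eq mult.right_neutral ring_class.ring_distribs(1))
  moreover have "vshift e b \<in> U" using upward[OF U uv(4) e] .
  ultimately have "z \<in> U" using cU qU uv by (simp add: convexD)
  then show "z \<in> U \<inter> vshift e ` lower_hs hq" using x by blast
qed

lemma part_ib:
  fixes U :: "('a::euclidean_space \<times> real) set"
  assumes U: "U_shaped U" and aq: "aug_point U (q, hq)"
  shows "U \<inter> vshift e ` lower_hs hq \<subseteq> (\<lambda>p. vshift (-e) q + 2 *\<^sub>R (p - vshift (-e) q)) ` (convex hull (insert (vshift (-e) q) U) \<inter> lower_hs hq)"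
proof
  fix p assume p: "p \<in> U \<inter> vshift e ` lower_hs hq"
  let ?c = "vshift (-e) q"
  define m where "m = (1/2) *\<^sub>R ?c + (1/2) *\<^sub>R p"
  have "m \<in> convex hull (insert ?c U)"
    unfolding m_def using p
    by (intro convexD) (auto intro: hull_inc)
  moreover have "m \<in> lower_hs hq"
  proof -
    have hp: "snd p \<le> fst hq \<bullet> fst p + snd hq + e" using p
      by (auto simp: lower_hs_def vshift_def)
    have hq': "snd q = fst hq \<bullet> fst q + snd hq" using aug_facts[OF U aq] by simp
    show ?thesis using hp hq' unfolding m_def
      by (simp add: lower_hs_def vshift_def inner_add_right algebra_simps)
  qed
  moreover have "p = ?c + 2 *\<^sub>R (m - ?c)"
    unfolding m_def by (simp add: algebra_simps scaleR_2)
  ultimately show "p \<in> (\<lambda>p. ?c + 2 *\<^sub>R (p - ?c)) ` (convex hull (insert ?c U) \<inter> lower_hs hq)"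
    by blast
qed

lemma part_iv:
  fixes U :: "('a::euclidean_space \<times> real) set"
  assumes U: "U_shaped U" and aq: "aug_point U (q, hq)"
    and z: "z \<in> interior (vshift e ` (convex hull (insert (vshift (-e) q) U) \<inter> lower_hs hq))"
    and pz: "fst p = fst z" and ap: "aug_point U (p, h)"
  shows "(p, h) \<in> DCap U e (q, hq)"
proof -
  let ?c = "vshift (-e) q"
  let ?T = "convex hull (insert ?c U) \<inter> lower_hs hq"
  have "?c \<in> lower_hs h"
  proof (rule ccontr)
    assume nc: "?c \<notin> lower_hs h"
    then have "?c \<in> upper_hs h" by (auto simp: lower_hs_def upper_hs_def)
    then have sub: "convex hull (insert ?c U) \<subseteq> upper_hs h"
      using aug_facts(1)[OF U ap] by (intro hull_minimal) (auto simp: convex_upper_hs)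
    from z obtain r where r: "r > 0" "ball z r \<subseteq> vshift e ` ?T"
      using interior_subset mem_interior by metis
    have "dist z (vshift (- (r/2)) z) < r" using r(1)
      by (simp add: vshift_eq dist_norm)
    then have "vshift (- (r/2)) z \<in> vshift e ` ?T" using r(2) by auto
    then have t1: "vshift (-e) (vshift (- (r/2)) z) \<in> ?T" by (simp add: vshift_image)
    have "z \<in> vshift e ` ?T" using z interior_subset by blast
    then have t2: "vshift (-e) z \<in> ?T" by (simp add: vshift_image)
    have a1: "snd z - r/2 - e \<ge> fst h \<bullet> fst p + snd h"
      using t1 sub pz by (auto simp: upper_hs_def vshift_def)
    have a2: "snd z - e \<le> fst hq \<bullet> fst p + snd hq"
      using t2 pz by (auto simp: lower_hs_def vshift_def)
    have a3: "snd p \<ge> fst hq \<bullet> fst p + snd hq"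
      using aug_facts(1)[OF U aq] aug_facts(2)[OF U ap] by (auto simp: upper_hs_def)
    have a4: "snd p = fst h \<bullet> fst p + snd h" using aug_facts(3)[OF U ap] .
    show False using a1 a2 a3 a4 r(1) by linarith
  qed
  then show ?thesis using ap by (simp add: DCap_def)
qed

lemma part_ii:
  fixes U :: "('a::euclidean_space \<times> real) set"
  assumes U: "U_shaped U" and aq: "aug_point U (q, hq)" and e: "e \<ge> 0"
  defines "T \<equiv> convex hull (insert (vshift (-e) q) U) \<inter> lower_hs hq"
  defines "UH \<equiv> U \<inter> vshift e ` lower_hs hq"
  shows "emeasure lebesgue T \<le> emeasure lebesgue UH"
    and "emeasure lebesgue UH \<le> ennreal (2 ^ DIM('a \<times> real)) * emeasure lebesgue T"
proof -
  have cT: "convex T" unfolding T_def by (intro convex_Int convex_convex_hull convex_lower_hs)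
  have cUH: "convex UH" unfolding UH_def shift_lower_hs using U
    by (intro convex_Int convex_lower_hs) (auto simp: U_shaped_def)
  have "vshift e ` T = (\<lambda>x. 1 *\<^sub>R x + (0,e)) ` T" by (simp add: vshift_eq)
  then have "emeasure lebesgue (vshift e ` T) = emeasure lebesgue T"
    using emeasure_lebesgue_affine[of 1 "(0,e)" T] by simp
  moreover have "emeasure lebesgue (vshift e ` T) \<le> emeasure lebesgue UH"
    using part_ia[OF U aq e] convex_lebesgue[OF cUH] unfolding T_def UH_def
    by (intro emeasure_mono) auto
  ultimately show "emeasure lebesgue T \<le> emeasure lebesgue UH" by simp
  let ?c = "vshift (-e) q"
  have eqT': "(\<lambda>p. ?c + 2 *\<^sub>R (p - ?c)) ` T = (\<lambda>x. 2 *\<^sub>R x + (- ?c)) ` T"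
    by (simp add: algebra_simps scaleR_2)
  have "convex ((\<lambda>x. (- ?c) + 2 *\<^sub>R x) ` T)" using cT by (rule convex_affinity)
  then have cT': "convex ((\<lambda>x. 2 *\<^sub>R x + (- ?c)) ` T)" by (simp add: add.commute)
  have "emeasure lebesgue UH \<le> emeasure lebesgue ((\<lambda>x. 2 *\<^sub>R x + (- ?c)) ` T)"
    using part_ib[OF U aq, of e] convex_lebesgue[OF cT'] eqT' unfolding T_def UH_def
    by (intro emeasure_mono) auto
  also have "\<dots> = ennreal (2 ^ DIM('a \<times> real)) * emeasure lebesgue T"
    using emeasure_lebesgue_affine[of 2 "- ?c" T] by simp
  finally show "emeasure lebesgue UH \<le> ennreal (2 ^ DIM('a \<times> real)) * emeasure lebesgue T" .
qed

lemma hplane_alt: "hplane h = lower_hs h \<inter> upper_hs h"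
  by (auto simp: hplane_def lower_hs_def upper_hs_def)

lemma lebesgue_borel_emeasure:
  fixes S :: "'n::euclidean_space set"
  assumes "S \<in> sets borel" shows "emeasure lebesgue S = emeasure lborel S"
  using assms by simp

lemma part_iii_sub:
  fixes U :: "('a::euclidean_space \<times> real) set"
  assumes U: "U_shaped U" and aq: "aug_point U (q, hq)" and e: "e > 0"
    and p: "fst p \<in> (\<lambda>x. (1/2) *\<^sub>R fst q + (1/2) *\<^sub>R x) ` fst ` DBase U e (q, hq)"
       "fst hq \<bullet> fst p + snd hq - e/2 \<le> snd p" "snd p \<le> fst hq \<bullet> fst p + snd hq"
  shows "p \<in> convex hull (insert (vshift (-e) q) U) \<inter> lower_hs hq"
proof -
  let ?c = "vshift (-e) q"
  let ?K = "convex hull (insert ?c U)"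
  obtain a b where hq: "hq = (a, b)" by fastforce
  obtain w where w: "w \<in> hplane hq" "w \<in> ?K" "fst p = (1/2) *\<^sub>R fst q + (1/2) *\<^sub>R fst w"
    using p(1) by (auto simp: DBase_def)
  have qU: "q \<in> U" and hqq: "snd q = a \<bullet> fst q + b" using aug_facts[OF U aq] hq by auto
  have hw: "snd w = a \<bullet> fst w + b" using w(1) hq by (simp add: hplane_def)
  define t where "t = (a \<bullet> fst p + b - snd p) / e"
  have te: "t * e = a \<bullet> fst p + b - snd p" unfolding t_def using e by simp
  have t0: "0 \<le> t" "t \<le> 1/2" using p(2,3) e hq unfolding t_def by (auto simp: field_simps)
  have peq: "p = t *\<^sub>R ?c + (1/2) *\<^sub>R w + (1/2 - t) *\<^sub>R q"
  proof (rule prod_eqI)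
    show "fst p = fst (t *\<^sub>R ?c + (1/2) *\<^sub>R w + (1/2 - t) *\<^sub>R q)"
      using w(3) by (simp add: vshift_def algebra_simps)
    have "snd p = a \<bullet> fst p + b - t * e" using te by simp
    also have "\<dots> = t * (snd q - e) + (1/2) * snd w + (1/2 - t) * snd q"
      using w(3) hqq hw by (simp add: inner_add_right algebra_simps)
    finally show "snd p = snd (t *\<^sub>R ?c + (1/2) *\<^sub>R w + (1/2 - t) *\<^sub>R q)"
      by (simp add: vshift_def)
  qed
  have "p \<in> convex hull {?c, w, q}"
    unfolding convex_hull_3 using t0 peq by (intro CollectI exI[of _ t] exI[of _ "1/2"] exI[of _ "1/2 - t"]) auto
  moreover have "convex hull {?c, w, q} \<subseteq> ?K"
    using w(2) qU by (intro hull_minimal) (auto intro: hull_inc)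
  ultimately have "p \<in> ?K" by blast
  moreover have "p \<in> lower_hs hq" using p(3) by (simp add: lower_hs_def)
  ultimately show ?thesis by blast
qed

lemma emeasure_interior_convex:
  fixes S :: "'n::euclidean_space set"
  assumes "convex S" shows "emeasure lebesgue (interior S) = emeasure lebesgue S"
proof -
  have eq: "S = interior S \<union> (S - interior S)" using interior_subset by blast
  have "S - interior S \<in> null_sets lebesgue"
  proof -
    have "S - interior S \<subseteq> frontier S" using closure_subset by (auto simp: frontier_def)
    then have "negligible (S - interior S)"
      using negligible_convex_frontier[OF assms] negligible_subset by blast
    then show ?thesis by (simp add: negligible_iff_null_sets)
  qed
  then have "emeasure lebesgue (interior S \<union> (S - interior S)) = emeasure lebesgue (interior S)"
    by (intro emeasure_Un_null_set) auto
  then show ?thesis using eq by simp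
qed

lemma slab_measure:
  fixes A :: "'a::euclidean_space set" and a :: 'a
  assumes A: "open A" and e: "e \<ge> 0"
  shows "emeasure lebesgue {p :: 'a \<times> real. fst p \<in> A \<and> a \<bullet> fst p + b - e \<le> snd p \<and> snd p \<le> a \<bullet> fst p + b}
         = ennreal e * emeasure lebesgue A"
proof -
  let ?S = "{p :: 'a \<times> real. fst p \<in> A \<and> a \<bullet> fst p + b - e \<le> snd p \<and> snd p \<le> a \<bullet> fst p + b}"
  have Seq: "?S = (A \<times> UNIV) \<inter> {p. a \<bullet> fst p + b - e \<le> snd p} \<inter> {p. snd p \<le> a \<bullet> fst p + b}"
    by auto
  have c1: "closed {p :: 'a \<times> real. a \<bullet> fst p + b - e \<le> snd p}"
    by (intro closed_Collect_le continuous_intros)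
  have c2: "closed {p :: 'a \<times> real. snd p \<le> a \<bullet> fst p + b}"
    by (intro closed_Collect_le continuous_intros)
  have Sb: "?S \<in> sets borel" unfolding Seq
    using A c1 c2 by (intro sets.Int borel_open borel_closed open_Times) auto
  have "emeasure lebesgue ?S = emeasure lborel ?S" using Sb by simp
  also have "\<dots> = emeasure (lborel \<Otimes>\<^sub>M lborel) ?S" by (simp add: lborel_prod)
  also have "\<dots> = (\<integral>\<^sup>+x. emeasure lborel (Pair x -` ?S) \<partial>lborel)"
  proof (rule lborel.emeasure_pair_measure_alt)
    have "sets (lborel \<Otimes>\<^sub>M lborel) = sets (lborel :: ('a \<times> real) measure)"
      by (simp only: lborel_prod)
    then show "?S \<in> sets (lborel \<Otimes>\<^sub>M lborel)" using Sb by simp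
  qed
  also have "\<dots> = (\<integral>\<^sup>+x. ennreal e * indicator A x \<partial>lborel)"
  proof (rule nn_integral_cong)
    fix x :: 'a
    show "emeasure lborel (Pair x -` ?S) = ennreal e * indicator A x"
    proof (cases "x \<in> A")
      case True
      then have "Pair x -` ?S = {a \<bullet> x + b - e .. a \<bullet> x + b}" by auto
      then show ?thesis using True e by simp
    next
      case False
      then have "Pair x -` ?S = {}" by auto
      then show ?thesis using False by simp
    qed
  qed
  also have "\<dots> = ennreal e * emeasure lborel A"
    using A by (intro nn_integral_cmult_indicator) auto
  also have "\<dots> = ennreal e * emeasure lebesgue A" using A by simp
  finally show ?thesis .
qed

lemma part_iii:
  fixes U :: "('a::euclidean_space \<times> real) set"
  assumes U: "U_shaped U" and aq: "aug_point U (q, hq)" and e: "e > 0"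
  shows "ennreal ((1/2)^DIM('a) / 2 * e) * emeasure lebesgue (vproj (DBase U e (q, hq)))
     \<le> emeasure lebesgue (convex hull (insert (vshift (-e) q) U) \<inter> lower_hs hq)"
proof -
  let ?T = "convex hull (insert (vshift (-e) q) U) \<inter> lower_hs hq"
  let ?D = "fst ` DBase U e (q, hq)"
  let ?D' = "(\<lambda>x. (1/2) *\<^sub>R fst q + (1/2) *\<^sub>R x) ` ?D"
  have "convex (DBase U e (q, hq))" unfolding DBase_def hplane_alt
    by (intro convex_Int convex_lower_hs convex_upper_hs convex_convex_hull)
  then have cD: "convex ?D" by (intro convex_linear_image bounded_linear.linear[OF bounded_linear_fst])
  then have cD': "convex ?D'" by (rule convex_affinity)
  have "?D' = (\<lambda>x. (1/2) *\<^sub>R x + (1/2) *\<^sub>R fst q) ` ?D" by (simp add: add.commute)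
  then have mD': "emeasure lebesgue ?D' = ennreal ((1/2)^DIM('a)) * emeasure lebesgue ?D"
    using emeasure_lebesgue_affine[of "1/2" "(1/2) *\<^sub>R fst q" ?D] by simp
  let ?S = "{p :: 'a \<times> real. fst p \<in> interior ?D' \<and> fst hq \<bullet> fst p + snd hq - e/2 \<le> snd p \<and> snd p \<le> fst hq \<bullet> fst p + snd hq}"
  have mS: "emeasure lebesgue ?S = ennreal (e/2) * emeasure lebesgue ?D'"
    using slab_measure[of "interior ?D'" "e/2" "fst hq" "snd hq"] e emeasure_interior_convex[OF cD'] by simp
  have "?S \<subseteq> ?T"
  proof
    fix p assume "p \<in> ?S"
    then show "p \<in> ?T" using part_iii_sub[OF U aq e, of p] interior_subset by blast
  qed
  moreover have "convex ?T" by (intro convex_Int convex_lower_hs convex_convex_hull)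
  ultimately have "emeasure lebesgue ?S \<le> emeasure lebesgue ?T"
    by (intro emeasure_mono convex_lebesgue)
  moreover have "ennreal ((1/2)^DIM('a) / 2 * e) = ennreal (e/2) * ennreal ((1/2)^DIM('a))"
    using e by (simp add: ennreal_mult[symmetric] mult_ac)
  ultimately show ?thesis using mS mD' unfolding vproj_def by (simp add: mult.assoc)
qed

theorem lemma9:
  shows "\<exists>c1 c2 c3 :: real. c1 > 0 \<and> c2 > 0 \<and> c3 > 0 \<and>
    (\<forall>(U :: ('a::euclidean_space \<times> real) set) (\<epsilon>::real) q hq.
      U_shaped U \<and> \<epsilon> > 0 \<and> aug_point U (q, hq) \<and> bounded (fst ` Cap U \<epsilon> (q, hq)) \<longrightarrow>
      (let Hm = lower_hs hq;
           c = vshift (-\<epsilon>) q;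
           T = convex hull (insert c U) \<inter> Hm;
           T' = (\<lambda>p. c + 2 *\<^sub>R (p - c)) ` T;
           UH = U \<inter> vshift \<epsilon> ` Hm
       in vshift \<epsilon> ` T \<subseteq> UH \<and> UH \<subseteq> T'
        \<and> ennreal c1 * emeasure lebesgue T \<le> emeasure lebesgue UH
        \<and> emeasure lebesgue UH \<le> ennreal c2 * emeasure lebesgue T
        \<and> emeasure lebesgue T \<ge> ennreal (c3 * \<epsilon>) * emeasure lebesgue (vproj (DBase U \<epsilon> (q, hq)))
        \<and> (\<forall>z \<in> interior (vshift \<epsilon> ` T). \<forall>p h.
             p \<in> lower_boundary U \<and> fst p = fst z \<and> aug_point U (p, h)
             \<longrightarrow> (p, h) \<in> DCap U \<epsilon> (q, hq))))"
proof (rule exI[of _ 1], rule exI[of _ "2 ^ DIM('a \<times> real)"], rule exI[of _ "(1/2)^DIM('a) / 2"], intro conjI allI impI)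
  fix U :: "('a \<times> real) set" and e :: real and q hq
  assume H: "U_shaped U \<and> e > 0 \<and> aug_point U (q, hq) \<and> bounded (fst ` Cap U e (q, hq))"
  then have U: "U_shaped U" and e: "e > 0" and aq: "aug_point U (q, hq)" by auto
  show "let Hm = lower_hs hq;
           c = vshift (-e) q;
           T = convex hull (insert c U) \<inter> Hm;
           T' = (\<lambda>p. c + 2 *\<^sub>R (p - c)) ` T;
           UH = U \<inter> vshift e ` Hm
       in vshift e ` T \<subseteq> UH \<and> UH \<subseteq> T'
        \<and> ennreal 1 * emeasure lebesgue T \<le> emeasure lebesgue UH
        \<and> emeasure lebesgue UH \<le> ennreal (2 ^ DIM('a \<times> real)) * emeasure lebesgue T
        \<and> emeasure lebesgue T \<ge> ennreal ((1/2)^DIM('a) / 2 * e) * emeasure lebesgue (vproj (DBase U e (q, hq)))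
        \<and> (\<forall>z \<in> interior (vshift e ` T). \<forall>p h.
             p \<in> lower_boundary U \<and> fst p = fst z \<and> aug_point U (p, h)
             \<longrightarrow> (p, h) \<in> DCap U e (q, hq))"
    unfolding Let_def
    using part_ia[OF U aq, of e] part_ib[OF U aq, of e] part_ii[OF U aq, of e] part_iii[OF U aq e]
      part_iv[OF U aq] e
    by auto
qed auto

end
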